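(* Let $r\in\mathbb{R}$ be a root of $a_nx^n+\dots+a_1x+a_0$ with $a_0,\dots,a_n\in\mathbb{Z}$, $a_n\neq0$. Let $\alpha=k_1/k_2<r<\beta=l_1/l_2$ be rationals ($k_1,l_1\in\mathbb{Z}$, $k_2,l_2\in\mathbb{Z}\setminus\{0\}$) such that the polynomial has no root in $[\alpha,\beta]$ other than $r$, and let $a=\max\{|a_0|,\dots,|a_n|,|k_1|,|k_2|,|l_1|,|l_2|\}$. Then the finite set $$A=\Big\{\sum_{i=0}^n b_ir^i: b_i\in\mathbb{Z}\cap[-a,a]\Big\}\cup\{\alpha,\ r-\alpha,\ \sqrt{r-\alpha},\ \beta,\ \beta-r,\ \sqrt{\beta-r}\}$$ has the property that every map $f:A\to\mathbb{R}$ satisfying (1)–(3) satisfies $f(r)=r$.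
   Context: For a finite set $A\subseteq\mathbb{R}$, conditions (1)–(3) on a map $f:A\to\mathbb{R}$ are: (1) if $1\in A$ then $f(1)=1$; (2) if $a,b\in A$ and $a+b\in A$ then $f(a+b)=f(a)+f(b)$; (3) if $a,b\in A$ and $a\cdot b\in A$ then $f(a\cdot b)=f(a)\cdot f(b)$. *)

theory Defs
  imports Complex_Main
begin

text \<open>Conditions (1)-(3) for a map f defined on the finite set A (values of f outside A are irrelevant).\<close>
definition cond123 :: "real set \<Rightarrow> (real \<Rightarrow> real) \<Rightarrow> bool" where
  "cond123 A f \<longleftrightarrow>
     (1 \<in> A \<longrightarrow> f 1 = 1) \<and>
     (\<forall>a\<in>A. \<forall>b\<in>A. a + b \<in> A \<longrightarrow> f (a + b) = f a + f b) \<and>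
     (\<forall>a\<in>A. \<forall>b\<in>A. a * b \<in> A \<longrightarrow> f (a * b) = f a * f b)"

end

theory Submission
  imports Defs "HOL-Library.FuncSet"
begin

lemma ifmul: "(of_int (if P then x else 0) * (y::real)) = (if P then of_int x * y else 0)"
  by simp

lemma ifsum: "(\<Sum>i\<le>n. of_int (if i = j then x else 0) * (r::real) ^ i) = (if j \<le> n then of_int x * r ^ j else 0)"
  unfolding ifmul by (simp add: sum.delta)

theorem mainTheorem8:
  fixes n :: nat and c :: "nat \<Rightarrow> int" and r :: real
    and k1 k2 l1 l2 :: int
  assumes "c n \<noteq> 0"
    and "(\<Sum>i\<le>n. of_int (c i) * r ^ i) = 0"
    and "k2 \<noteq> 0" and "l2 \<noteq> 0"
    and "of_int k1 / of_int k2 < r" and "r < of_int l1 / of_int l2"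
    and "\<forall>x \<in> {of_int k1 / of_int k2 .. of_int l1 / of_int l2}.
            (\<Sum>i\<le>n. of_int (c i) * x ^ i) = 0 \<longrightarrow> x = r"
  shows "let \<alpha> = (of_int k1 / of_int k2 :: real);
             \<beta> = (of_int l1 / of_int l2 :: real);
             a = Max ((\<lambda>i. \<bar>c i\<bar>) ` {..n} \<union> {\<bar>k1\<bar>, \<bar>k2\<bar>, \<bar>l1\<bar>, \<bar>l2\<bar>});
             A = {(\<Sum>i\<le>n. of_int (b i) * r ^ i) | b :: nat \<Rightarrow> int. \<forall>i\<le>n. \<bar>b i\<bar> \<le> a}
                 \<union> {\<alpha>, r - \<alpha>, sqrt (r - \<alpha>), \<beta>, \<beta> - r, sqrt (\<beta> - r)}
         in finite A \<and> (\<forall>f. cond123 A f \<longrightarrow> f r = r)"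
proof -
  define \<alpha> where "\<alpha> = (of_int k1 / of_int k2 :: real)"
  define \<beta> where "\<beta> = (of_int l1 / of_int l2 :: real)"
  define a where "a = Max ((\<lambda>i. \<bar>c i\<bar>) ` {..n} \<union> {\<bar>k1\<bar>, \<bar>k2\<bar>, \<bar>l1\<bar>, \<bar>l2\<bar>})"
  define P where "P = (\<lambda>b :: nat \<Rightarrow> int. (\<Sum>i\<le>n. of_int (b i) * r ^ i))"
  define A where "A = {(\<Sum>i\<le>n. of_int (b i) * r ^ i) | b :: nat \<Rightarrow> int. \<forall>i\<le>n. \<bar>b i\<bar> \<le> a}
                 \<union> {\<alpha>, r - \<alpha>, sqrt (r - \<alpha>), \<beta>, \<beta> - r, sqrt (\<beta> - r)}"
  have fin: "finite ((\<lambda>i. \<bar>c i\<bar>) ` {..n} \<union> {\<bar>k1\<bar>, \<bar>k2\<bar>, \<bar>l1\<bar>, \<bar>l2\<bar>})" by simp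
  have ac: "\<And>i. i \<le> n \<Longrightarrow> \<bar>c i\<bar> \<le> a" unfolding a_def using fin by (intro Max_ge) auto
  have ak: "\<bar>k1\<bar> \<le> a" "\<bar>k2\<bar> \<le> a" "\<bar>l1\<bar> \<le> a" "\<bar>l2\<bar> \<le> a"
    unfolding a_def using fin by (intro Max_ge; auto)+
  have a1: "1 \<le> a" using ak(2) assms(3) by linarith
  have memS: "\<And>b. (\<forall>i\<le>n. \<bar>b i\<bar> \<le> a) \<Longrightarrow> P b \<in> A" unfolding A_def P_def by blast
  have memI: "of_int m \<in> A" if "\<bar>m\<bar> \<le> a" for m
  proof -
    have "P (\<lambda>i. if i = 0 then m else 0) = of_int m"
      unfolding P_def by (simp add: ifsum)
    moreover have "P (\<lambda>i. if i = 0 then m else 0) \<in> A" using that a1 by (intro memS) auto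
    ultimately show ?thesis by simp
  qed
  have memP: "r ^ j \<in> A" if "j \<le> n" for j
  proof -
    have "P (\<lambda>i. if i = j then 1 else 0) = r ^ j"
      unfolding P_def using that by (simp add: ifsum)
    moreover have "P (\<lambda>i. if i = j then 1 else 0) \<in> A" using that a1 by (intro memS) auto
    ultimately show ?thesis by simp
  qed
  have memC: "of_int (c j) * r ^ j \<in> A" if "j \<le> n" for j
  proof -
    have "P (\<lambda>i. if i = j then c j else 0) = of_int (c j) * r ^ j"
      unfolding P_def using that by (simp add: ifsum)
    moreover have "P (\<lambda>i. if i = j then c j else 0) \<in> A" using that a1 ac by (intro memS) auto
    ultimately show ?thesis by simp
  qed
  have memT: "(\<Sum>i\<le>j. of_int (c i) * r ^ i) \<in> A" if "j \<le> n" for j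
  proof -
    have "P (\<lambda>i. if i \<le> j then c i else 0) = (\<Sum>i\<in>{..n} \<inter> {..j}. of_int (c i) * r ^ i)"
      unfolding P_def by (subst sum.inter_restrict) (auto simp: ifmul)
    also have "{..n} \<inter> {..j} = {..j}" using that by auto
    finally have "P (\<lambda>i. if i \<le> j then c i else 0) = (\<Sum>i\<le>j. of_int (c i) * r ^ i)" .
    moreover have "P (\<lambda>i. if i \<le> j then c i else 0) \<in> A" using that a1 ac by (intro memS) auto
    ultimately show ?thesis by simp
  qed
  have n1: "n \<ge> 1"
  proof (rule ccontr)
    assume "\<not> n \<ge> 1" then have "n = 0" by simp
    with assms(1,2) show False by simp
  qed
  have finA: "finite A"
  proof -
    have "{(\<Sum>i\<le>n. of_int (b i) * r ^ i) | b :: nat \<Rightarrow> int. \<forall>i\<le>n. \<bar>b i\<bar> \<le> a}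
        \<subseteq> P ` (PiE {..n} (\<lambda>_. {-a..a}))"
    proof
      fix x assume "x \<in> {(\<Sum>i\<le>n. of_int (b i) * r ^ i) | b :: nat \<Rightarrow> int. \<forall>i\<le>n. \<bar>b i\<bar> \<le> a}"
      then obtain b where b: "\<forall>i\<le>n. \<bar>b i\<bar> \<le> a" "x = (\<Sum>i\<le>n. of_int (b i) * r ^ i)" by blast
      have "restrict b {..n} \<in> PiE {..n} (\<lambda>_. {-a..a})" using b(1) by (auto simp: abs_le_iff)
      moreover have "P (restrict b {..n}) = x" unfolding P_def b(2) by (intro sum.cong) auto
      ultimately show "x \<in> P ` (PiE {..n} (\<lambda>_. {-a..a}))" by blast
    qed
    moreover have "finite (P ` (PiE {..n} (\<lambda>_. {-a..a})))" by (intro finite_imageI finite_PiE) auto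
    ultimately show ?thesis unfolding A_def by (meson finite_Un finite_insert finite.emptyI finite_subset)
  qed
  have main: "f r = r" if cf: "cond123 A f" for f
  proof -
    have add: "\<And>x y. x \<in> A \<Longrightarrow> y \<in> A \<Longrightarrow> x + y \<in> A \<Longrightarrow> f (x + y) = f x + f y"
      and mul: "\<And>x y. x \<in> A \<Longrightarrow> y \<in> A \<Longrightarrow> x * y \<in> A \<Longrightarrow> f (x * y) = f x * f y"
      using cf unfolding cond123_def by auto
    have one: "f 1 = 1" using cf memI[of 1] a1 unfolding cond123_def by auto
    have zA: "0 \<in> A" using memI[of 0] a1 by simp
    have f0: "f 0 = 0" using add[OF zA zA] zA by simp
    have fnat: "f (of_nat k) = of_nat k" if "int k \<le> a" for k
      using that
    proof (induction k)
      case 0 then show ?case using f0 by simp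
    next
      case (Suc k)
      have "f (of_nat k + 1) = f (of_nat k) + f 1"
        using add[of "of_nat k" 1] memI[of "int k"] memI[of 1] memI[of "int (Suc k)"] Suc a1 by (simp add: add.commute)
      then show ?case using Suc one by (simp add: add.commute)
    qed
    have fint: "f (of_int m) = of_int m" if "\<bar>m\<bar> \<le> a" for m
    proof (cases "m \<ge> 0")
      case True
      then show ?thesis using fnat[of "nat m"] that by simp
    next
      case False
      have "f (of_int m + of_int (-m)) = f (of_int m) + f (of_int (-m))"
        using add[of "of_int m" "of_int (-m)"] memI[of m] memI[of "-m"] zA that by simp
      moreover have "f (of_int (-m)) = of_int (-m)" using fnat[of "nat (-m)"] that False by simp
      ultimately show ?thesis using f0 by simp
    qed
    have rA: "r \<in> A" using memP[of 1] n1 by simp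
    have \<alpha>A: "\<alpha> \<in> A" "r - \<alpha> \<in> A" "sqrt (r - \<alpha>) \<in> A" "\<beta> \<in> A" "\<beta> - r \<in> A" "sqrt (\<beta> - r) \<in> A"
      unfolding A_def by auto
    have falpha: "f \<alpha> = \<alpha>"
    proof -
      have "\<alpha> * of_int k2 = of_int k1" unfolding \<alpha>_def using assms(3) by simp
      then have "f (of_int k1) = f \<alpha> * f (of_int k2)"
        using mul[of \<alpha> "of_int k2"] \<alpha>A memI ak by simp
      then have "of_int k1 = f \<alpha> * of_int k2" using fint ak by simp
      then show ?thesis unfolding \<alpha>_def using assms(3) by (simp add: field_simps)
    qed
    have fbeta: "f \<beta> = \<beta>"
    proof -
      have "\<beta> * of_int l2 = of_int l1" unfolding \<beta>_def using assms(4) by simp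
      then have "f (of_int l1) = f \<beta> * f (of_int l2)"
        using mul[of \<beta> "of_int l2"] \<alpha>A memI ak by simp
      then have "of_int l1 = f \<beta> * of_int l2" using fint ak by simp
      then show ?thesis unfolding \<beta>_def using assms(4) by (simp add: field_simps)
    qed
    have ge: "f r \<ge> \<alpha>"
    proof -
      have pos: "r - \<alpha> \<ge> 0" using assms(5) \<alpha>_def by simp
      have sq: "sqrt (r - \<alpha>) * sqrt (r - \<alpha>) = r - \<alpha>" using pos by simp
      have "f (sqrt (r - \<alpha>) * sqrt (r - \<alpha>)) = f (sqrt (r - \<alpha>)) * f (sqrt (r - \<alpha>))"
        by (rule mul) (use \<alpha>A sq in auto)
      then have "f (r - \<alpha>) \<ge> 0" using pos by simp
      moreover have "f ((r - \<alpha>) + \<alpha>) = f (r - \<alpha>) + f \<alpha>" by (rule add) (use \<alpha>A rA in auto)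
      ultimately show ?thesis using falpha by simp
    qed
    have le: "f r \<le> \<beta>"
    proof -
      have pos: "\<beta> - r \<ge> 0" using assms(6) \<beta>_def by simp
      have sq: "sqrt (\<beta> - r) * sqrt (\<beta> - r) = \<beta> - r" using pos by simp
      have "f (sqrt (\<beta> - r) * sqrt (\<beta> - r)) = f (sqrt (\<beta> - r)) * f (sqrt (\<beta> - r))"
        by (rule mul) (use \<alpha>A sq in auto)
      then have "f (\<beta> - r) \<ge> 0" using pos by simp
      moreover have "f (r + (\<beta> - r)) = f r + f (\<beta> - r)" by (rule add) (use \<alpha>A rA in auto)
      ultimately show ?thesis using fbeta by simp
    qed
    have fpow: "f (r ^ j) = f r ^ j" if "j \<le> n" for j
      using that
    proof (induction j)
      case 0 then show ?case using one by simp
    next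
      case (Suc j)
      have "r * r ^ j \<in> A" using memP[of "Suc j"] Suc.prems by simp
      then have "f (r * r ^ j) = f r * f (r ^ j)" using mul[of r "r ^ j"] rA memP Suc.prems by simp
      then show ?case using Suc by simp
    qed
    have fc: "f (of_int (c j) * r ^ j) = of_int (c j) * f r ^ j" if "j \<le> n" for j
      using mul[of "of_int (c j)" "r ^ j"] memI ac memP memC that fint fpow by simp
    have fsum: "f (\<Sum>i\<le>j. of_int (c i) * r ^ i) = (\<Sum>i\<le>j. of_int (c i) * f r ^ i)" if "j \<le> n" for j
      using that
    proof (induction j)
      case 0 then show ?case using fc[of 0] by simp
    next
      case (Suc j)
      have "f ((\<Sum>i\<le>j. of_int (c i) * r ^ i) + of_int (c (Suc j)) * r ^ Suc j)
          = f (\<Sum>i\<le>j. of_int (c i) * r ^ i) + f (of_int (c (Suc j)) * r ^ Suc j)"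
        by (rule add) (use memT[of j] memC[of "Suc j"] memT[of "Suc j"] Suc.prems in auto)
      then have "f (\<Sum>i\<le>Suc j. of_int (c i) * r ^ i) = (\<Sum>i\<le>j. of_int (c i) * f r ^ i) + of_int (c (Suc j)) * f r ^ Suc j"
        using Suc fc[of "Suc j"] by (simp only: sum.atMost_Suc)
      then show ?case by (simp only: sum.atMost_Suc)
    qed
    have "(\<Sum>i\<le>n. of_int (c i) * f r ^ i) = 0" using fsum[of n] assms(2) f0 by simp
    moreover have "f r \<in> {of_int k1 / of_int k2 .. of_int l1 / of_int l2}"
      using ge le unfolding \<alpha>_def \<beta>_def by simp
    ultimately show ?thesis using assms(7) by blast
  qed
  have "finite A \<and> (\<forall>f. cond123 A f \<longrightarrow> f r = r)" using finA main by blast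
  then show ?thesis unfolding Let_def A_def a_def \<alpha>_def \<beta>_def .
qed

end
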